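(* Let $n$ be a positive integer and $\alpha,\beta\in\mathbb{R}$. Put $M=T_n\cdot\max\{1,n^{2\beta}\}\cdot\max_{1\le i\le n}|J_{\alpha-\beta}(i)|$. Then every eigenvalue of $A_n^{\alpha,\beta}$ lies in the real interval \[ \Big[\,2\min\{1,n^{\alpha+\beta}\}-M\ ,\ M\,\Big]. \]
   Context: For $i,j$ positive integers, $(i,j)$ denotes the greatest common divisor and $[i,j]$ the least common multiple. For $\alpha,\beta\in\mathbb{R}$ and a positive integer $n$, $A_n^{\alpha,\beta}$ is the $n\times n$ real matrix with $(i,j)$ entry $(i,j)^{\alpha}[i,j]^{\beta}$. $E_n$ is the $n\times n$ matrix with $(E_n)_{ij}=1$ if $j\mid i$ and $(E_n)_{ij}=0$ otherwise; $t_n$ denotes the smallest eigenvalue and $T_n$ the largest eigenvalue of the symmetric matrix $E_n^{T}E_n$. For real $s$, $J_s$ is the arithmetical function $J_s(k)=k^{s}\prod_{p\mid k}\left(1-p^{-s}\right)$ (product over primes $p$ dividing $k$), equivalently $J_s(k)=\sum_{d\mid k} d^{s}\mu(k/d)$ where $\mu$ is the Möbius function. *)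

theory Defs
  imports "Jordan_Normal_Form.Char_Poly" "HOL-Computational_Algebra.Primes"
begin

text \<open>Matrices are n x n with 0-based indices; entry (i,j) corresponds to the
paper's entry (i+1, j+1).\<close>

definition gcd_lcm_mat :: "nat \<Rightarrow> real \<Rightarrow> real \<Rightarrow> real mat" where
  "gcd_lcm_mat n \<alpha> \<beta> = mat n n (\<lambda>(i,j).
     real (gcd (i+1) (j+1)) powr \<alpha> * real (lcm (i+1) (j+1)) powr \<beta>)"

definition E_mat :: "nat \<Rightarrow> real mat" where
  "E_mat n = mat n n (\<lambda>(i,j). if (j+1) dvd (i+1) then 1 else 0)"

definition T_max :: "nat \<Rightarrow> real" where
  "T_max n = Max {k. eigenvalue (transpose_mat (E_mat n) * E_mat n) k}"

definition t_min :: "nat \<Rightarrow> real" where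
  "t_min n = Min {k. eigenvalue (transpose_mat (E_mat n) * E_mat n) k}"

definition Jordan_tot :: "real \<Rightarrow> nat \<Rightarrow> real" where
  "Jordan_tot s k = real k powr s * (\<Prod>p\<in>prime_factors k. (1 - real p powr (-s)))"

end

theory Submission
  imports Defs "Jordan_Normal_Form.Spectral_Radius" "HOL-Analysis.Function_Topology" "HOL-Analysis.Convex"
begin

lemma J_one: "Jordan_tot s 1 = 1"
  by (simp add: Jordan_tot_def)

lemma J_p_ndvd:
  assumes p: "prime p" and nd: "\<not> p dvd e" and e: "e > 0"
  shows "Jordan_tot s (p*e) = (real p powr s - 1) * Jordan_tot s e"
proof -
  have pf: "prime_factors (p*e) = insert p (prime_factors e)"
    using p e by (simp add: prime_factors_product prime_prime_factors)
  have pn: "p \<notin> prime_factors e" using nd by auto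
  have pp: "real p > 0" using p prime_gt_0_nat by auto
  have 1: "real p powr s * (1 - real p powr (-s)) = real p powr s - 1"
    using pp by (simp add: right_diff_distrib powr_add[symmetric])
  have "Jordan_tot s (p*e) = real (p*e) powr s * ((1 - real p powr (-s)) * (\<Prod>q\<in>prime_factors e. (1 - real q powr (-s))))"
    unfolding Jordan_tot_def pf using pn by simp
  also have "\<dots> = (real p powr s * (1 - real p powr (-s))) * Jordan_tot s e"
    unfolding Jordan_tot_def by (simp add: powr_mult)
  finally show ?thesis using 1 by simp
qed

lemma J_p_dvd:
  assumes p: "prime p" and d: "p dvd e" and e: "e > 0"
  shows "Jordan_tot s (p*e) = real p powr s * Jordan_tot s e"
proof -
  have pf: "prime_factors (p*e) = prime_factors e"
    using p e d by (auto simp add: prime_factors_product prime_prime_factors)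
  show ?thesis
    unfolding Jordan_tot_def pf by (simp add: powr_mult)
qed


lemma J_divsum:
  assumes "g > 0"
  shows "(\<Sum>d\<in>{d. d dvd g}. Jordan_tot s d) = real g powr s"
  using assms
proof (induction g rule: less_induct)
  case (less g)
  show ?case
  proof (cases "g = 1")
    case True
    have "{d. d dvd (1::nat)} = {1}" by auto
    then show ?thesis using True J_one[of s] by simp
  next
    case False
    obtain p where p: "prime p" "p dvd g" using prime_factor_nat[OF False] by blast
    obtain h where g: "g = p*h" using p by (auto elim: dvdE)
    have p1: "p > 1" using p prime_gt_1_nat by auto
    have h0: "h > 0" using less.prems g by auto
    have hg: "h < g" using g p1 h0 by auto
    have IHh: "(\<Sum>d\<in>{d. d dvd h}. Jordan_tot s d) = real h powr s" using less.IH hg h0 by blast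
    have fin: "finite {d. d dvd h}" using h0 by simp
    have pp: "real p > 0" using p1 by simp
    have inj: "inj_on (\<lambda>d. p*d) X" for X using p1 by (auto simp: inj_on_def)
    show ?thesis
    proof (cases "p dvd h")
      case False
      have U: "{d. d dvd g} = {d. d dvd h} \<union> (\<lambda>d. p*d) ` {d. d dvd h}"
      proof
        show "{d. d dvd g} \<subseteq> {d. d dvd h} \<union> (\<lambda>d. p*d) ` {d. d dvd h}"
        proof
          fix d assume d: "d \<in> {d. d dvd g}"
          show "d \<in> {d. d dvd h} \<union> (\<lambda>d. p*d) ` {d. d dvd h}"
          proof (cases "p dvd d")
            case True
            then obtain e where e: "d = p*e" by (auto elim: dvdE)
            then have "e dvd h" using d g p1 by auto
            then show ?thesis using e by auto
          next
            case False
            then have "coprime d p" using p(1) by (meson coprime_commute prime_imp_coprime)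
            then have "d dvd h" using d g by (simp add: coprime_dvd_mult_right_iff)
            then show ?thesis by auto
          qed
        qed
        show "{d. d dvd h} \<union> (\<lambda>d. p*d) ` {d. d dvd h} \<subseteq> {d. d dvd g}"
          using g by auto
      qed
      have D: "{d. d dvd h} \<inter> (\<lambda>d. p*d) ` {d. d dvd h} = {}"
        using False by auto
      have "(\<Sum>d\<in>{d. d dvd g}. Jordan_tot s d)
          = (\<Sum>d\<in>{d. d dvd h}. Jordan_tot s d) + (\<Sum>d\<in>(\<lambda>d. p*d) ` {d. d dvd h}. Jordan_tot s d)"
        unfolding U using fin D by (simp add: sum.union_disjoint)
      also have "(\<Sum>d\<in>(\<lambda>d. p*d) ` {d. d dvd h}. Jordan_tot s d) = (\<Sum>d\<in>{d. d dvd h}. Jordan_tot s (p*d))"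
        using inj by (simp add: sum.reindex)
      also have "\<dots> = (\<Sum>d\<in>{d. d dvd h}. (real p powr s - 1) * Jordan_tot s d)"
      proof (rule sum.cong)
        fix d assume "d \<in> {d. d dvd h}"
        then have "\<not> p dvd d" "d > 0" using False h0 by (auto intro: dvd_trans)
        then show "Jordan_tot s (p*d) = (real p powr s - 1) * Jordan_tot s d"
          using J_p_ndvd p(1) by blast
      qed simp
      also have "\<dots> = (real p powr s - 1) * real h powr s"
        by (simp only: sum_distrib_left[symmetric] IHh)
      finally have "(\<Sum>d\<in>{d. d dvd g}. Jordan_tot s d) = real h powr s + (real p powr s - 1) * real h powr s"
        using IHh by simp
      then show ?thesis using g by (simp add: powr_mult algebra_simps)
    next
      case True
      obtain h' where h: "h = p*h'" using True by (auto elim: dvdE)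
      have h'0: "h' > 0" using h0 h by auto
      have h'g: "h' < g" using hg h p1 h'0 by (metis le_less_trans less_imp_le_nat mult_le_mono1 mult_1 less_imp_le)
      have IHh': "(\<Sum>d\<in>{d. d dvd h'}. Jordan_tot s d) = real h' powr s" using less.IH h'g h'0 by blast
      define B where "B = {e. e dvd h \<and> \<not> p*e dvd h}"
      have U: "{d. d dvd g} = {d. d dvd h} \<union> (\<lambda>d. p*d) ` B"
      proof
        show "{d. d dvd g} \<subseteq> {d. d dvd h} \<union> (\<lambda>d. p*d) ` B"
        proof
          fix d assume d: "d \<in> {d. d dvd g}"
          show "d \<in> {d. d dvd h} \<union> (\<lambda>d. p*d) ` B"
          proof (cases "d dvd h")
            case True then show ?thesis by auto
          next
            case nd: False
            have "p dvd d"
            proof (rule ccontr)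
              assume "\<not> p dvd d"
              then have "coprime d p" using p(1) by (meson coprime_commute prime_imp_coprime)
              then have "d dvd h" using d g by (simp add: coprime_dvd_mult_right_iff)
              then show False using nd by simp
            qed
            then obtain e where e: "d = p*e" by (auto elim: dvdE)
            then have "e dvd h" using d g p1 by auto
            then have "e \<in> B" using nd e unfolding B_def by auto
            then show ?thesis using e by auto
          qed
        qed
        show "{d. d dvd h} \<union> (\<lambda>d. p*d) ` B \<subseteq> {d. d dvd g}"
          using g unfolding B_def by auto
      qed
      have D: "{d. d dvd h} \<inter> (\<lambda>d. p*d) ` B = {}"
        unfolding B_def by auto
      have finB: "finite B" using fin unfolding B_def by (rule rev_finite_subset) auto
      have C: "{e. e dvd h \<and> p*e dvd h} = {e. e dvd h'}"
        using h p1 by auto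
      have split: "{d. d dvd h} = B \<union> {e. e dvd h \<and> p*e dvd h}"
        unfolding B_def by auto
      have sB: "(\<Sum>d\<in>B. Jordan_tot s d) = real h powr s - real h' powr s"
      proof -
        have "(\<Sum>d\<in>{d. d dvd h}. Jordan_tot s d) = (\<Sum>d\<in>B. Jordan_tot s d) + (\<Sum>d\<in>{e. e dvd h'}. Jordan_tot s d)"
          unfolding split C[symmetric] using fin
          by (subst sum.union_disjoint) (auto simp: B_def intro: rev_finite_subset[OF fin])
        then show ?thesis using IHh IHh' by simp
      qed
      have "(\<Sum>d\<in>{d. d dvd g}. Jordan_tot s d)
          = (\<Sum>d\<in>{d. d dvd h}. Jordan_tot s d) + (\<Sum>d\<in>(\<lambda>d. p*d) ` B. Jordan_tot s d)"
        unfolding U using fin finB D by (simp add: sum.union_disjoint)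
      also have "(\<Sum>d\<in>(\<lambda>d. p*d) ` B. Jordan_tot s d) = (\<Sum>d\<in>B. Jordan_tot s (p*d))"
        using inj by (simp add: sum.reindex)
      also have "\<dots> = (\<Sum>d\<in>B. real p powr s * Jordan_tot s d)"
      proof (rule sum.cong)
        fix d assume dB: "d \<in> B"
        have pd: "p dvd d"
        proof (rule ccontr)
          assume "\<not> p dvd d"
          then have "coprime p d" using p(1) by (meson prime_imp_coprime)
          moreover have "p dvd h" "d dvd h" using True dB unfolding B_def by auto
          ultimately have "p*d dvd h" by (simp add: divides_mult)
          then show False using dB unfolding B_def by auto
        qed
        have "d > 0" using dB h0 unfolding B_def by (auto intro: Nat.gr0I)
        then show "Jordan_tot s (p*d) = real p powr s * Jordan_tot s d"
          using J_p_dvd p(1) pd by blast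
      qed simp
      also have "\<dots> = real p powr s * (real h powr s - real h' powr s)"
        by (simp only: sum_distrib_left[symmetric] sB)
      finally have "(\<Sum>d\<in>{d. d dvd g}. Jordan_tot s d) = real h powr s + real p powr s * (real h powr s - real h' powr s)"
        using IHh by simp
      then show ?thesis using g h by (simp add: powr_mult algebra_simps)
    qed
  qed
qed


lemma gcd_J:
  assumes "i < n" "j < n"
  shows "real (gcd (Suc i) (Suc j)) powr s
    = (\<Sum>k<n. Jordan_tot s (Suc k) * (if Suc k dvd Suc i \<and> Suc k dvd Suc j then 1 else 0))"
proof -
  define K where "K = {k\<in>{..<n}. Suc k dvd Suc i \<and> Suc k dvd Suc j}"
  have "(\<Sum>k<n. Jordan_tot s (Suc k) * (if Suc k dvd Suc i \<and> Suc k dvd Suc j then 1 else 0))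
      = (\<Sum>k<n. if Suc k dvd Suc i \<and> Suc k dvd Suc j then Jordan_tot s (Suc k) else 0)"
    by (rule sum.cong) auto
  also have "\<dots> = (\<Sum>k\<in>K. Jordan_tot s (Suc k))"
    unfolding K_def by (rule sum.inter_filter[symmetric]) simp
  also have "\<dots> = (\<Sum>d\<in>Suc ` K. Jordan_tot s d)"
    by (simp add: sum.reindex)
  also have "Suc ` K = {d. d dvd gcd (Suc i) (Suc j)}"
  proof
    show "Suc ` K \<subseteq> {d. d dvd gcd (Suc i) (Suc j)}" unfolding K_def by auto
    show "{d. d dvd gcd (Suc i) (Suc j)} \<subseteq> Suc ` K"
    proof
      fix d assume d: "d \<in> {d. d dvd gcd (Suc i) (Suc j)}"
      then have di: "d dvd Suc i" "d dvd Suc j" by auto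
      then have "d \<noteq> 0" by (metis dvd_0_left_iff nat.distinct(1))
      then obtain k where k: "d = Suc k" using not0_implies_Suc by blast
      have "d \<le> Suc i" using di(1) dvd_imp_le by blast
      then have "k < n" using k assms by auto
      then show "d \<in> Suc ` K" using k di unfolding K_def by auto
    qed
  qed
  also have "(\<Sum>d\<in>{d. d dvd gcd (Suc i) (Suc j)}. Jordan_tot s d) = real (gcd (Suc i) (Suc j)) powr s"
    by (rule J_divsum) simp
  finally show ?thesis by simp
qed

lemma entry_formula:
  fixes i j :: nat and a b :: real
  assumes "i > 0" "j > 0"
  shows "real (gcd i j) powr a * real (lcm i j) powr b
     = real i powr b * real j powr b * real (gcd i j) powr (a - b)"
proof -
  have g0: "real (gcd i j) > 0" using assms by simp
  have l0: "real (lcm i j) > 0" using assms by (simp add: lcm_pos_nat)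
  have prod: "real (gcd i j) * real (lcm i j) = real i * real j"
    by (metis of_nat_mult prod_gcd_lcm_nat)
  have "real (gcd i j) powr a = real (gcd i j) powr (a - b) * real (gcd i j) powr b"
    by (simp add: powr_add[symmetric])
  moreover have "real (gcd i j) powr b * real (lcm i j) powr b = real i powr b * real j powr b"
    using g0 l0 prod assms by (metis of_nat_0_le_iff powr_mult)
  ultimately show ?thesis by (simp add: algebra_simps)
qed


lemma quad_zero_lin:
  fixes c e :: real
  assumes "\<And>t. 2 * t * c + t^2 * e \<le> 0"
  shows "c = 0"
proof (rule ccontr)
  assume c: "c \<noteq> 0"
  define t where "t = c / (\<bar>e\<bar> + 1)"
  have dpos: "\<bar>e\<bar>+1 > 0" by linarith
  have "2 * t * c + t^2 * e \<le> 0" by (rule assms)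
  moreover have "2 * t * c + t^2 * e = c^2 / (\<bar>e\<bar>+1) * (2 + e / (\<bar>e\<bar>+1))"
  proof -
    define d where "d = \<bar>e\<bar> + 1"
    have d: "d \<noteq> 0" unfolding d_def by linarith
    have "2 * (c/d) * c + (c/d)^2 * e = c^2 / d * (2 + e / d)"
      using d by (simp add: power2_eq_square field_simps)
    then show ?thesis unfolding t_def d_def .
  qed
  moreover have "c^2 / (\<bar>e\<bar>+1) > 0" using c dpos by (intro divide_pos_pos) simp_all
  moreover have "2 + e / (\<bar>e\<bar>+1) > 0"
  proof -
    have "-(\<bar>e\<bar>+1) < e" by linarith
    then have "-1 < e / (\<bar>e\<bar>+1)" using dpos by (simp only: less_divide_eq) simp
    then show ?thesis by linarith
  qed
  ultimately show False using mult_pos_pos[of "c^2 / (\<bar>e\<bar>+1)" "2 + e / (\<bar>e\<bar>+1)"] by linarith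
qed


lemma norm_expand:
  fixes u v :: "nat \<Rightarrow> real"
  shows "(\<Sum>i<n. (u i + t * v i)^2) = (\<Sum>i<n. (u i)^2) + 2 * t * (\<Sum>i<n. u i * v i) + t^2 * (\<Sum>i<n. (v i)^2)"
proof -
  have "(\<Sum>i<n. (u i + t * v i)^2) = (\<Sum>i<n. (u i)^2 + 2 * t * (u i * v i) + t^2 * (v i)^2)"
    by (rule sum.cong) (simp_all add: power2_eq_square algebra_simps)
  then show ?thesis by (simp only: sum.distrib sum_distrib_left[symmetric])
qed


lemma quad_expand:
  fixes s :: "nat \<Rightarrow> nat \<Rightarrow> real"
  assumes sym: "\<forall>i<n. \<forall>j<n. s i j = s j i"
  shows "(\<Sum>i<n. \<Sum>j<n. (u i + t * v i) * s i j * (u j + t * v j))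
    = (\<Sum>i<n. \<Sum>j<n. u i * s i j * u j) + 2 * t * (\<Sum>i<n. \<Sum>j<n. u i * s i j * v j)
      + t^2 * (\<Sum>i<n. \<Sum>j<n. v i * s i j * v j)"
proof -
  have swap: "(\<Sum>i<n. \<Sum>j<n. v i * s i j * u j) = (\<Sum>i<n. \<Sum>j<n. u i * s i j * v j)"
  proof -
    have "(\<Sum>i<n. \<Sum>j<n. v i * s i j * u j) = (\<Sum>j<n. \<Sum>i<n. v i * s i j * u j)"
      by (rule sum.swap)
    also have "\<dots> = (\<Sum>i<n. \<Sum>j<n. u i * s i j * v j)"
    proof (rule sum.cong[OF refl], rule sum.cong[OF refl])
      fix i j assume "i \<in> {..<n}" "j \<in> {..<n}"
      then have "s j i = s i j" using sym by auto
      then show "v j * s j i * u i = u i * s i j * v j" by simp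
    qed
    finally show ?thesis .
  qed
  have "(\<Sum>i<n. \<Sum>j<n. (u i + t * v i) * s i j * (u j + t * v j))
    = (\<Sum>i<n. \<Sum>j<n. u i * s i j * u j + t * (u i * s i j * v j) + t * (v i * s i j * u j)
          + t^2 * (v i * s i j * v j))"
  proof -
    have "\<And>i j. (u i + t * v i) * s i j * (u j + t * v j) = u i * s i j * u j + t * (u i * s i j * v j) + t * (v i * s i j * u j)
          + t^2 * (v i * s i j * v j)" by (simp add: algebra_simps power2_eq_square)
    then show ?thesis by (simp only:)
  qed
  also have "\<dots> = (\<Sum>i<n. \<Sum>j<n. u i * s i j * u j) + t * (\<Sum>i<n. \<Sum>j<n. u i * s i j * v j)
      + t * (\<Sum>i<n. \<Sum>j<n. v i * s i j * u j) + t^2 * (\<Sum>i<n. \<Sum>j<n. v i * s i j * v j)"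
    by (simp only: sum.distrib sum_distrib_left[symmetric])
  finally have X: "(\<Sum>i<n. \<Sum>j<n. (u i + t * v i) * s i j * (u j + t * v j)) = (\<Sum>i<n. \<Sum>j<n. u i * s i j * u j) + t * (\<Sum>i<n. \<Sum>j<n. u i * s i j * v j)
      + t * (\<Sum>i<n. \<Sum>j<n. v i * s i j * u j) + t^2 * (\<Sum>i<n. \<Sum>j<n. v i * s i j * v j)" .
  have eq: "\<And>A B C D::real. C = B \<Longrightarrow> A + t*B + t*C + t^2*D = A + 2*t*B + t^2*D" by simp
  show ?thesis by (rule trans[OF X eq[OF swap]])
qed


lemma compact_box:
  "compact (PiE UNIV (\<lambda>i. if i < (n::nat) then {-1..1} else {0::real}))"
proof -
  have "compactin (product_topology (\<lambda>i. euclidean) UNIV) (PiE UNIV (\<lambda>i. if i < n then {-1..1} else {0::real}))"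
    by (subst compactin_PiE) (auto simp: compactin_euclidean_iff)
  then show ?thesis by (simp add: euclidean_product_topology compactin_euclidean_iff)
qed

lemma cont_coord: "continuous_on S (\<lambda>x::nat\<Rightarrow>real. x i)"
  by (rule continuous_on_subset[OF continuous_on_product_coordinates]) simp

lemma rayleigh:
  fixes s :: "nat \<Rightarrow> nat \<Rightarrow> real"
  assumes n: "n \<ge> 1" and sym: "\<forall>i<n. \<forall>j<n. s i j = s j i"
  shows "\<exists>u lam. (\<exists>i<n. u i \<noteq> 0) \<and> (\<forall>i<n. (\<Sum>j<n. s i j * u j) = lam * u i)
     \<and> (\<forall>w. (\<Sum>i<n. \<Sum>j<n. w i * s i j * w j) \<le> lam * (\<Sum>i<n. (w i)^2))"
proof -
  define q where "q w = (\<Sum>i<n. \<Sum>j<n. w i * s i j * w j)" for w :: "nat \<Rightarrow> real"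
  define N where "N w = (\<Sum>i<n. (w i)^2)" for w :: "nat \<Rightarrow> real"
  define K where "K = {w::nat\<Rightarrow>real. (\<forall>i. n \<le> i \<longrightarrow> w i = 0) \<and> N w = 1}"
  define P where "P = PiE UNIV (\<lambda>i. if i < n then {-1..1} else {0::real})"
  have contN: "continuous_on S N" for S
    unfolding N_def by (intro continuous_intros cont_coord)
  have contq: "continuous_on S q" for S
    unfolding q_def by (intro continuous_intros cont_coord)
  have closedK: "closed K"
  proof -
    have "K = {w. \<forall>i. n \<le> i \<longrightarrow> w i = 0} \<inter> {w. N w = 1}" unfolding K_def by auto
    moreover have "closed {w::nat\<Rightarrow>real. \<forall>i. n \<le> i \<longrightarrow> w i = 0}"
      by (intro closed_Collect_all closed_Collect_imp open_Collect_const closed_Collect_eq cont_coord continuous_on_const)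
    moreover have "closed {w. N w = 1}"
      by (intro closed_Collect_eq contN continuous_on_const)
    ultimately show ?thesis by auto
  qed
  have KP: "K \<subseteq> P"
  proof
    fix w assume w: "w \<in> K"
    have "w i \<in> (if i < n then {-1..1} else {0})" for i
    proof (cases "i < n")
      case True
      have "(w i)^2 \<le> N w" unfolding N_def
        by (rule member_le_sum[of i "{..<n}" "\<lambda>i. (w i)^2"]) (use True in auto)
      then have "(w i)^2 \<le> 1" using w unfolding K_def by auto
      then have "\<bar>w i\<bar> \<le> 1" by (simp add: abs_square_le_1)
      then show ?thesis using True by auto
    next
      case False then show ?thesis using w unfolding K_def by auto
    qed
    then show "w \<in> P" unfolding P_def by auto
  qed
  have compK: "compact K"
  proof -
    have "compact (P \<inter> K)" using compact_box closedK unfolding P_def by (rule compact_Int_closed)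
    moreover have "P \<inter> K = K" using KP by auto
    ultimately show ?thesis by simp
  qed
  define e0 where "e0 = (\<lambda>i::nat. if i = 0 then 1 else (0::real))"
  have "e0 \<in> K"
  proof -
    have "N e0 = (\<Sum>i<n. if i = 0 then 1 else 0)" unfolding N_def e0_def by (rule sum.cong) auto
    also have "\<dots> = 1" using n by (simp add: sum.delta)
    finally show ?thesis unfolding K_def e0_def using n by auto
  qed
  then have Kne: "K \<noteq> {}" by auto
  obtain u where uK: "u \<in> K" and umax: "\<And>w. w \<in> K \<Longrightarrow> q w \<le> q u"
    using continuous_attains_sup[OF compK Kne contq] by blast
  define lam where "lam = q u"
  have Nu: "N u = 1" using uK unfolding K_def by auto
  have bound: "q w \<le> lam * N w" for w
  proof (cases "N w = 0")
    case True
    have "\<forall>i\<in>{..<n}. (w i)^2 = 0"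
      using True unfolding N_def by (subst sum_nonneg_eq_0_iff[symmetric]) auto
    then have "\<forall>i<n. w i = 0" by auto
    then have "q w = 0" unfolding q_def by simp
    then show ?thesis using True by simp
  next
    case False
    have Npos: "N w > 0" using False unfolding N_def by (metis sum_nonneg zero_le_power2 less_eq_real_def)
    define r where "r = sqrt (N w)"
    have r: "r > 0" "r^2 = N w" using Npos unfolding r_def by auto
    define w' where "w' i = (if i < n then w i / r else 0)" for i
    have "N w' = N w / r^2"
      unfolding N_def w'_def by (simp add: sum_divide_distrib power_divide)
    then have "N w' = 1" using r Npos by simp
    then have "w' \<in> K" unfolding K_def w'_def by auto
    then have "q w' \<le> lam" using umax unfolding lam_def by blast
    moreover have "q w' = q w / r^2"
      unfolding q_def w'_def by (simp add: sum_divide_distrib power2_eq_square)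
    ultimately have "q w / N w \<le> lam" using r by simp
    then show ?thesis using Npos by (simp add: divide_le_eq mult.commute)
  qed
  have lin: "(\<Sum>i<n. \<Sum>j<n. u i * s i j * v j) = lam * (\<Sum>i<n. u i * v i)" for v
  proof -
    let ?B = "(\<Sum>i<n. \<Sum>j<n. u i * s i j * v j)"
    let ?c = "?B - lam * (\<Sum>i<n. u i * v i)"
    let ?e = "q v - lam * N v"
    have "2 * t * ?c + t^2 * ?e \<le> 0" for t
    proof -
      have "q (\<lambda>i. u i + t * v i) \<le> lam * N (\<lambda>i. u i + t * v i)" by (rule bound)
      moreover have "q (\<lambda>i. u i + t * v i) = q u + 2 * t * ?B + t^2 * q v"
        unfolding q_def by (rule quad_expand[OF sym])
      moreover have "N (\<lambda>i. u i + t * v i) = N u + 2 * t * (\<Sum>i<n. u i * v i) + t^2 * N v"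
        unfolding N_def by (rule norm_expand)
      ultimately show ?thesis using Nu unfolding lam_def by (simp add: algebra_simps)
    qed
    then have "?c = 0" by (rule quad_zero_lin)
    then show ?thesis by simp
  qed
  define v where "v j = (\<Sum>i<n. s j i * u i) - lam * u j" for j
  have "(\<Sum>i<n. \<Sum>j<n. u i * s i j * v j) = (\<Sum>j<n. (\<Sum>i<n. s j i * u i) * v j)"
  proof -
    have "(\<Sum>i<n. \<Sum>j<n. u i * s i j * v j) = (\<Sum>j<n. \<Sum>i<n. u i * s i j * v j)" by (rule sum.swap)
    also have "\<dots> = (\<Sum>j<n. (\<Sum>i<n. s j i * u i) * v j)"
    proof (rule sum.cong[OF refl])
      fix j assume j: "j \<in> {..<n}"
      have "(\<Sum>i<n. u i * s i j * v j) = (\<Sum>i<n. s j i * u i * v j)"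
        by (rule sum.cong[OF refl]) (use sym j in auto)
      then show "(\<Sum>i<n. u i * s i j * v j) = (\<Sum>i<n. s j i * u i) * v j"
        by (simp add: sum_distrib_right)
    qed
    finally show ?thesis .
  qed
  then have "(\<Sum>j<n. (\<Sum>i<n. s j i * u i) * v j) = (\<Sum>j<n. lam * u j * v j)"
    using lin[of v] by (simp add: sum_distrib_left mult.assoc)
  then have "(\<Sum>j<n. (v j)^2) = 0"
    unfolding v_def by (simp add: power2_eq_square left_diff_distrib sum_subtractf)
  then have v0: "\<forall>j<n. v j = 0"
    by (subst (asm) sum_nonneg_eq_0_iff) auto
  have eig: "\<forall>i<n. (\<Sum>j<n. s i j * u j) = lam * u i"
    using v0 unfolding v_def by auto
  have nz: "\<exists>i<n. u i \<noteq> 0"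
  proof (rule ccontr)
    assume "\<not> (\<exists>i<n. u i \<noteq> 0)"
    then have "N u = 0" unfolding N_def by simp
    then show False using Nu by simp
  qed
  show ?thesis using nz eig bound unfolding q_def N_def by blast
qed


definition ee :: "nat \<Rightarrow> nat \<Rightarrow> real" where
  "ee k i = (if Suc i dvd Suc k then 1 else 0)"

lemma S_entry:
  assumes "i < n" "j < n"
  shows "(transpose_mat (E_mat n) * E_mat n) $$ (i,j) = (\<Sum>k<n. ee k i * ee k j)"
  using assms by (simp add: E_mat_def ee_def scalar_prod_def lessThan_atLeast0 col_def row_def)

lemma T_bound1:
  assumes n: "n \<ge> 1"
  shows "(\<Sum>k<n. (\<Sum>i<n. ee k i * w i)^2) \<le> T_max n * (\<Sum>i<n. (w i)^2)"
proof -
  define s where "s i j = (\<Sum>k<n. ee k i * ee k j)" for i j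
  have sym: "\<forall>i<n. \<forall>j<n. s i j = s j i" unfolding s_def by (auto simp: mult.commute)
  obtain u lam where nz: "\<exists>i<n. u i \<noteq> 0" and eig: "\<forall>i<n. (\<Sum>j<n. s i j * u j) = lam * u i"
    and bd: "\<forall>w. (\<Sum>i<n. \<Sum>j<n. w i * s i j * w j) \<le> lam * (\<Sum>i<n. (w i)^2)"
    using rayleigh[OF n sym] by blast
  define S where "S = transpose_mat (E_mat n) * E_mat n"
  have Sc: "S \<in> carrier_mat n n" unfolding S_def E_mat_def by auto
  have "eigenvector S (vec n u) lam"
    unfolding eigenvector_def
  proof (intro conjI)
    show "vec n u \<in> carrier_vec (dim_row S)" using Sc by auto
    show "vec n u \<noteq> 0\<^sub>v (dim_row S)"
    proof
      assume "vec n u = 0\<^sub>v (dim_row S)"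
      then have "\<forall>i<n. u i = 0" using Sc by (metis carrier_matD(1) index_vec index_zero_vec(1))
      then show False using nz by blast
    qed
    show "S *\<^sub>v vec n u = lam \<cdot>\<^sub>v vec n u"
    proof (rule eq_vecI)
      fix i assume "i < dim_vec (lam \<cdot>\<^sub>v vec n u)"
      then have i: "i < n" by simp
      have "(S *\<^sub>v vec n u) $ i = (\<Sum>j<n. S $$ (i,j) * u j)"
        using Sc i by (simp add: scalar_prod_def lessThan_atLeast0 row_def)
      also have "\<dots> = (\<Sum>j<n. s i j * u j)"
        using i by (intro sum.cong refl) (simp add: S_def S_entry s_def)
      also have "\<dots> = lam * u i" using eig i by blast
      finally show "(S *\<^sub>v vec n u) $ i = (lam \<cdot>\<^sub>v vec n u) $ i" using i by simp
    qed (use Sc in simp)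
  qed
  then have ev: "eigenvalue S lam" unfolding eigenvalue_def by blast
  have fin: "finite {k. eigenvalue S k}"
    using card_finite_spectrum(1)[OF Sc] unfolding spectrum_def by simp
  have lamT: "lam \<le> T_max n"
    unfolding T_max_def S_def[symmetric] using ev fin by (intro Max_ge) auto
  have eq: "(\<Sum>k<n. (\<Sum>i<n. ee k i * w i)^2) = (\<Sum>i<n. \<Sum>j<n. w i * s i j * w j)"
  proof -
    have "(\<Sum>k<n. (\<Sum>i<n. ee k i * w i)^2) = (\<Sum>k<n. \<Sum>i<n. \<Sum>j<n. ee k i * w i * (ee k j * w j))"
      by (simp add: power2_eq_square sum_product)
    also have "\<dots> = (\<Sum>i<n. \<Sum>k<n. \<Sum>j<n. ee k i * w i * (ee k j * w j))"
      by (rule sum.swap)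
    also have "\<dots> = (\<Sum>i<n. \<Sum>j<n. \<Sum>k<n. ee k i * w i * (ee k j * w j))"
      by (intro sum.cong refl sum.swap)
    also have "\<dots> = (\<Sum>i<n. \<Sum>j<n. w i * s i j * w j)"
      unfolding s_def by (intro sum.cong refl) (simp add: sum_distrib_left sum_distrib_right mult_ac)
    finally show ?thesis .
  qed
  have "0 \<le> (\<Sum>i<n. (w i)^2)" by (simp add: sum_nonneg)
  then have "lam * (\<Sum>i<n. (w i)^2) \<le> T_max n * (\<Sum>i<n. (w i)^2)"
    by (rule mult_right_mono[OF lamT])
  then show ?thesis using eq bd[rule_format, of w] by linarith
qed

lemma T_nonneg:
  assumes n: "n \<ge> 1"
  shows "T_max n \<ge> 0"
proof -
  define w where "w i = (if i = 0 then 1 else (0::real))" for i :: nat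
  have "(\<Sum>i<n. (w i)^2) = (\<Sum>i<n. if i = 0 then 1 else 0)" unfolding w_def by (intro sum.cong) auto
  also have "\<dots> = 1" using n by (simp add: sum.delta)
  finally have N1: "(\<Sum>i<n. (w i)^2) = 1" .
  have "0 \<le> (\<Sum>k<n. (\<Sum>i<n. ee k i * w i)^2)" by (simp add: sum_nonneg)
  also have "\<dots> \<le> T_max n" using T_bound1[OF n, of w] N1 by simp
  finally show ?thesis .
qed

lemma T_bound2:
  assumes n: "n \<ge> 1"
  shows "(\<Sum>k<n. (\<Sum>i<n. ee i k * z i)^2) \<le> T_max n * (\<Sum>i<n. (z i)^2)"
proof -
  define y where "y k = (\<Sum>i<n. ee i k * z i)" for k
  define g where "g i = (\<Sum>k<n. ee i k * y k)" for i
  define Y where "Y = (\<Sum>k<n. (y k)^2)"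
  have Y: "Y = (\<Sum>i<n. z i * g i)"
  proof -
    have "Y = (\<Sum>k<n. \<Sum>i<n. y k * (ee i k * z i))"
      unfolding Y_def power2_eq_square by (simp add: y_def sum_distrib_left)
    also have "\<dots> = (\<Sum>i<n. \<Sum>k<n. y k * (ee i k * z i))" by (rule sum.swap)
    also have "\<dots> = (\<Sum>i<n. z i * g i)"
      unfolding g_def by (intro sum.cong refl) (simp add: sum_distrib_left mult_ac)
    finally show ?thesis .
  qed
  have Y0: "Y \<ge> 0" unfolding Y_def by (simp add: sum_nonneg)
  have gb: "(\<Sum>i<n. (g i)^2) \<le> T_max n * Y"
    unfolding g_def Y_def by (rule T_bound1[OF n])
  have "Y^2 \<le> (\<Sum>i<n. (z i)^2) * (\<Sum>i<n. (g i)^2)"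
    unfolding Y by (rule Cauchy_Schwarz_ineq_sum)
  also from gb have "(\<Sum>i<n. (z i)^2) * (\<Sum>i<n. (g i)^2) \<le> (\<Sum>i<n. (z i)^2) * (T_max n * Y)"
    by (intro mult_left_mono) (simp_all add: sum_nonneg)
  finally have YY: "Y * Y \<le> (T_max n * (\<Sum>i<n. (z i)^2)) * Y" by (simp add: power2_eq_square mult_ac)
  have "Y \<le> T_max n * (\<Sum>i<n. (z i)^2)"
  proof (cases "Y = 0")
    case True then show ?thesis using T_nonneg[OF n] by (simp add: sum_nonneg)
  next
    case False then have "Y > 0" using Y0 by simp
    then show ?thesis using YY by (simp add: mult_le_cancel_right_pos)
  qed
  then show ?thesis unfolding Y_def y_def .
qed


definition aa :: "real \<Rightarrow> real \<Rightarrow> nat \<Rightarrow> nat \<Rightarrow> real" where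
  "aa \<alpha> \<beta> i j = real (gcd (Suc i) (Suc j)) powr \<alpha> * real (lcm (Suc i) (Suc j)) powr \<beta>"

lemma aa_repr:
  assumes "i < n" "j < n"
  shows "aa \<alpha> \<beta> i j = real (Suc i) powr \<beta> * real (Suc j) powr \<beta>
      * (\<Sum>k<n. Jordan_tot (\<alpha> - \<beta>) (Suc k) * (ee i k * ee j k))"
proof -
  have "aa \<alpha> \<beta> i j = real (Suc i) powr \<beta> * real (Suc j) powr \<beta> * real (gcd (Suc i) (Suc j)) powr (\<alpha> - \<beta>)"
    unfolding aa_def by (rule entry_formula) simp_all
  also have "real (gcd (Suc i) (Suc j)) powr (\<alpha> - \<beta>)
     = (\<Sum>k<n. Jordan_tot (\<alpha> - \<beta>) (Suc k) * (if Suc k dvd Suc i \<and> Suc k dvd Suc j then 1 else 0))"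
    by (rule gcd_J[OF assms])
  also have "\<dots> = (\<Sum>k<n. Jordan_tot (\<alpha> - \<beta>) (Suc k) * (ee i k * ee j k))"
    by (intro sum.cong refl) (simp add: ee_def)
  finally show ?thesis .
qed

lemma Q_repr:
  "(\<Sum>i<n. \<Sum>j<n. x i * aa \<alpha> \<beta> i j * x j)
   = (\<Sum>k<n. Jordan_tot (\<alpha> - \<beta>) (Suc k) * (\<Sum>i<n. ee i k * (real (Suc i) powr \<beta> * x i))^2)"
proof -
  define z where "z i = real (Suc i) powr \<beta> * x i" for i
  define J where "J k = Jordan_tot (\<alpha> - \<beta>) (Suc k)" for k
  have "(\<Sum>i<n. \<Sum>j<n. x i * aa \<alpha> \<beta> i j * x j)
      = (\<Sum>i<n. \<Sum>j<n. \<Sum>k<n. J k * ((ee i k * z i) * (ee j k * z j)))"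
  proof (intro sum.cong refl)
    fix i j assume "i \<in> {..<n}" "j \<in> {..<n}"
    then have "aa \<alpha> \<beta> i j = real (Suc i) powr \<beta> * real (Suc j) powr \<beta> * (\<Sum>k<n. J k * (ee i k * ee j k))"
      unfolding J_def by (intro aa_repr) auto
    then show "x i * aa \<alpha> \<beta> i j * x j = (\<Sum>k<n. J k * ((ee i k * z i) * (ee j k * z j)))"
      by (simp add: z_def sum_distrib_left mult_ac)
  qed
  also have "\<dots> = (\<Sum>i<n. \<Sum>k<n. \<Sum>j<n. J k * ((ee i k * z i) * (ee j k * z j)))"
    by (intro sum.cong refl sum.swap)
  also have "\<dots> = (\<Sum>k<n. \<Sum>i<n. \<Sum>j<n. J k * ((ee i k * z i) * (ee j k * z j)))"
    by (rule sum.swap)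
  also have "\<dots> = (\<Sum>k<n. J k * (\<Sum>i<n. ee i k * z i)^2)"
  proof (intro sum.cong refl)
    fix k
    have "(\<Sum>i<n. ee i k * z i)^2 = (\<Sum>i<n. \<Sum>j<n. (ee i k * z i) * (ee j k * z j))"
      by (simp only: power2_eq_square sum_product)
    then show "(\<Sum>i<n. \<Sum>j<n. J k * ((ee i k * z i) * (ee j k * z j))) = J k * (\<Sum>i<n. ee i k * z i)^2"
      by (simp only: sum_distrib_left)
  qed
  finally show ?thesis unfolding z_def J_def .
qed

lemma Q_bound:
  assumes n: "n \<ge> 1"
  shows "(\<Sum>i<n. \<Sum>j<n. x i * aa \<alpha> \<beta> i j * x j)
     \<le> (T_max n * max 1 (real n powr (2 * \<beta>))
         * Max ((\<lambda>i. \<bar>Jordan_tot (\<alpha> - \<beta>) i\<bar>) ` {1..n})) * (\<Sum>i<n. (x i)^2)"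
proof -
  define m where "m = Max ((\<lambda>i. \<bar>Jordan_tot (\<alpha> - \<beta>) i\<bar>) ` {1..n})"
  define c where "c = max 1 (real n powr (2 * \<beta>))"
  define T where "T = T_max n"
  define z where "z i = real (Suc i) powr \<beta> * x i" for i
  have mJ: "\<bar>Jordan_tot (\<alpha> - \<beta>) (Suc k)\<bar> \<le> m" if "k < n" for k
    unfolding m_def using that by (intro Max_ge) auto
  have m0: "m \<ge> 0" using mJ[of 0] n by fastforce
  have T0: "T \<ge> 0" using T_nonneg[OF n] unfolding T_def .
  have zb0: "(\<Sum>i<n. (z i)^2) \<le> (\<Sum>i<n. c * (x i)^2)"
  proof (rule sum_mono)
    fix i assume i: "i \<in> {..<n}"
    have pw: "(real (Suc i) powr \<beta>)^2 = real (Suc i) powr (2 * \<beta>)"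
      by (simp only: power2_eq_square powr_add[symmetric] mult_2)
    have "(z i)^2 = real (Suc i) powr (2 * \<beta>) * (x i)^2"
      unfolding z_def power_mult_distrib pw ..
    also have "real (Suc i) powr (2 * \<beta>) \<le> c"
    proof (cases "\<beta> \<ge> 0")
      case True
      have "real (Suc i) powr (2 * \<beta>) \<le> real n powr (2 * \<beta>)"
        using i True by (intro powr_mono2) auto
      then show ?thesis unfolding c_def by linarith
    next
      case False
      have "real (Suc i) powr (2 * \<beta>) \<le> real (Suc i) powr 0"
        using False by (intro powr_mono) auto
      then show ?thesis unfolding c_def by simp
    qed
    then have "real (Suc i) powr (2 * \<beta>) * (x i)^2 \<le> c * (x i)^2"
      by (intro mult_right_mono) auto
    finally show "(z i)^2 \<le> c * (x i)^2" .
  qed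
  have zb: "(\<Sum>i<n. (z i)^2) \<le> c * (\<Sum>i<n. (x i)^2)"
    using zb0 by (simp only: sum_distrib_left)
  have "(\<Sum>i<n. \<Sum>j<n. x i * aa \<alpha> \<beta> i j * x j)
      = (\<Sum>k<n. Jordan_tot (\<alpha> - \<beta>) (Suc k) * (\<Sum>i<n. ee i k * z i)^2)"
    unfolding z_def by (rule Q_repr)
  also have "\<dots> \<le> (\<Sum>k<n. m * (\<Sum>i<n. ee i k * z i)^2)"
  proof (rule sum_mono)
    fix k assume "k \<in> {..<n}"
    then have "Jordan_tot (\<alpha> - \<beta>) (Suc k) \<le> m" using mJ[of k] by auto
    then show "Jordan_tot (\<alpha> - \<beta>) (Suc k) * (\<Sum>i<n. ee i k * z i)^2 \<le> m * (\<Sum>i<n. ee i k * z i)^2"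
      by (intro mult_right_mono) auto
  qed
  also have "\<dots> = m * (\<Sum>k<n. (\<Sum>i<n. ee i k * z i)^2)" by (simp add: sum_distrib_left)
  also have "\<dots> \<le> m * (T * (\<Sum>i<n. (z i)^2))"
    using T_bound2[OF n, of z] m0 unfolding T_def by (intro mult_left_mono) auto
  also have "\<dots> \<le> m * (T * (c * (\<Sum>i<n. (x i)^2)))"
    using zb m0 T0 by (intro mult_left_mono) auto
  finally show ?thesis unfolding m_def[symmetric] c_def[symmetric] T_def[symmetric]
    by (simp add: mult_ac)
qed


lemma aa_nonneg: "aa \<alpha> \<beta> i j \<ge> 0"
  unfolding aa_def by simp

lemma aa_diag:
  assumes "i < n"
  shows "aa \<alpha> \<beta> i i \<ge> min 1 (real n powr (\<alpha> + \<beta>))"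
proof -
  have "aa \<alpha> \<beta> i i = real (Suc i) powr (\<alpha> + \<beta>)"
    unfolding aa_def by (simp add: powr_add)
  moreover have "real (Suc i) powr (\<alpha> + \<beta>) \<ge> min 1 (real n powr (\<alpha> + \<beta>))"
  proof (cases "\<alpha> + \<beta> \<ge> 0")
    case True
    have "real (Suc i) powr 0 \<le> real (Suc i) powr (\<alpha> + \<beta>)"
      using True by (intro powr_mono) auto
    then show ?thesis by simp
  next
    case False
    have "real n powr (\<alpha> + \<beta>) \<le> real (Suc i) powr (\<alpha> + \<beta>)"
      using False assms by (intro powr_mono2') auto
    then show ?thesis by linarith
  qed
  ultimately show ?thesis by simp
qed

lemma lower_aux:
  assumes "n \<ge> 1"
  shows "(\<Sum>i<n. \<Sum>j<n. x i * aa \<alpha> \<beta> i j * x j) + (\<Sum>i<n. \<Sum>j<n. \<bar>x i\<bar> * aa \<alpha> \<beta> i j * \<bar>x j\<bar>)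
     \<ge> 2 * min 1 (real n powr (\<alpha> + \<beta>)) * (\<Sum>i<n. (x i)^2)"
proof -
  define d where "d = min 1 (real n powr (\<alpha> + \<beta>))"
  define f where "f i j = x i * aa \<alpha> \<beta> i j * x j + \<bar>x i\<bar> * aa \<alpha> \<beta> i j * \<bar>x j\<bar>" for i j
  have fnn: "f i j \<ge> 0" for i j
  proof -
    have "f i j = (x i * x j + \<bar>x i * x j\<bar>) * aa \<alpha> \<beta> i j"
      unfolding f_def by (simp add: abs_mult algebra_simps)
    moreover have "x i * x j + \<bar>x i * x j\<bar> \<ge> 0" by linarith
    ultimately show ?thesis using aa_nonneg by simp
  qed
  have "(\<Sum>i<n. 2 * d * (x i)^2) \<le> (\<Sum>i<n. \<Sum>j<n. f i j)"
  proof (rule sum_mono)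
    fix i assume i: "i \<in> {..<n}"
    have "f i i = 2 * (x i)^2 * aa \<alpha> \<beta> i i"
      unfolding f_def by (simp add: power2_eq_square abs_mult_self_eq)
    also have "2 * (x i)^2 * aa \<alpha> \<beta> i i \<ge> 2 * (x i)^2 * d"
      using aa_diag[of i n \<alpha> \<beta>] i unfolding d_def by (intro mult_left_mono) auto
    moreover have "f i i \<le> (\<Sum>j<n. f i j)"
      using i fnn by (intro member_le_sum) auto
    ultimately show "2 * d * (x i)^2 \<le> (\<Sum>j<n. f i j)"
      by (simp add: mult_ac)
  qed
  also have "(\<Sum>i<n. \<Sum>j<n. f i j) = (\<Sum>i<n. \<Sum>j<n. x i * aa \<alpha> \<beta> i j * x j) + (\<Sum>i<n. \<Sum>j<n. \<bar>x i\<bar> * aa \<alpha> \<beta> i j * \<bar>x j\<bar>)"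
    unfolding f_def by (simp only: sum.distrib)
  finally show ?thesis unfolding d_def by (simp add: sum_distrib_left)
qed

theorem theorem3p2:
  fixes n :: nat and \<alpha> \<beta> ev :: real
  assumes "n \<ge> 1"
    and "eigenvalue (gcd_lcm_mat n \<alpha> \<beta>) ev"
  defines "M \<equiv> T_max n * max 1 (real n powr (2 * \<beta>))
                 * Max ((\<lambda>i. \<bar>Jordan_tot (\<alpha> - \<beta>) i\<bar>) ` {1..n})"
  shows "2 * min 1 (real n powr (\<alpha> + \<beta>)) - M \<le> ev \<and> ev \<le> M"
proof -
  define A where "A = gcd_lcm_mat n \<alpha> \<beta>"
  have Ac: "A \<in> carrier_mat n n" unfolding A_def gcd_lcm_mat_def by auto
  have Aij: "A $$ (i,j) = aa \<alpha> \<beta> i j" if "i < n" "j < n" for i j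
    unfolding A_def gcd_lcm_mat_def aa_def using that by simp
  obtain v where v: "v \<in> carrier_vec n" "v \<noteq> 0\<^sub>v n" "A *\<^sub>v v = ev \<cdot>\<^sub>v v"
    using assms(2) Ac unfolding eigenvalue_def eigenvector_def A_def[symmetric] by auto
  define x where "x i = v $ i" for i
  have eqn: "(\<Sum>j<n. aa \<alpha> \<beta> i j * x j) = ev * x i" if i: "i < n" for i
  proof -
    have "(A *\<^sub>v v) $ i = (\<Sum>j<n. aa \<alpha> \<beta> i j * x j)"
      using Ac v(1) i by (simp add: scalar_prod_def lessThan_atLeast0 row_def x_def Aij)
    moreover have "(ev \<cdot>\<^sub>v v) $ i = ev * x i" using v(1) i by (simp add: x_def)
    ultimately show ?thesis using v(3) by simp
  qed
  define N where "N = (\<Sum>i<n. (x i)^2)"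
  have Q: "(\<Sum>i<n. \<Sum>j<n. x i * aa \<alpha> \<beta> i j * x j) = ev * N"
  proof -
    have "(\<Sum>i<n. \<Sum>j<n. x i * aa \<alpha> \<beta> i j * x j) = (\<Sum>i<n. x i * (\<Sum>j<n. aa \<alpha> \<beta> i j * x j))"
      by (simp add: sum_distrib_left mult_ac)
    also have "\<dots> = (\<Sum>i<n. ev * (x i)^2)"
    proof (intro sum.cong refl)
      fix i assume "i \<in> {..<n}"
      then have e: "(\<Sum>j<n. aa \<alpha> \<beta> i j * x j) = ev * x i" by (intro eqn) auto
      show "x i * (\<Sum>j<n. aa \<alpha> \<beta> i j * x j) = ev * (x i)^2"
        unfolding e by (simp add: power2_eq_square)
    qed
    finally show ?thesis unfolding N_def by (simp add: sum_distrib_left)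
  qed
  have Npos: "N > 0"
  proof -
    obtain i where i: "i < n" "x i \<noteq> 0"
    proof (rule ccontr)
      assume "\<not> thesis"
      then have "\<forall>i<n. x i = 0" using that by blast
      then have "v = 0\<^sub>v n" using v(1) by (intro eq_vecI) (auto simp: x_def)
      then show False using v(2) by simp
    qed
    have "(x i)^2 \<le> N" unfolding N_def using i by (intro member_le_sum) auto
    moreover have "(x i)^2 > 0" using i by simp
    ultimately show ?thesis by linarith
  qed
  have up: "(\<Sum>i<n. \<Sum>j<n. y i * aa \<alpha> \<beta> i j * y j) \<le> M * (\<Sum>i<n. (y i)^2)" for y
    unfolding M_def by (rule Q_bound[OF assms(1)])
  have "ev * N \<le> M * N" using up[of x] Q unfolding N_def by simp
  then have ub: "ev \<le> M" using Npos by simp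
  have "(\<Sum>i<n. \<Sum>j<n. \<bar>x i\<bar> * aa \<alpha> \<beta> i j * \<bar>x j\<bar>) \<le> M * N"
    using up[of "\<lambda>i. \<bar>x i\<bar>"] unfolding N_def by simp
  moreover have "ev * N + (\<Sum>i<n. \<Sum>j<n. \<bar>x i\<bar> * aa \<alpha> \<beta> i j * \<bar>x j\<bar>)
     \<ge> 2 * min 1 (real n powr (\<alpha> + \<beta>)) * N"
    using lower_aux[OF assms(1), where x=x and \<alpha>=\<alpha> and \<beta>=\<beta>] Q unfolding N_def by simp
  ultimately have "(2 * min 1 (real n powr (\<alpha> + \<beta>)) - M) * N \<le> ev * N"
    by (simp add: algebra_simps)
  then have lb: "2 * min 1 (real n powr (\<alpha> + \<beta>)) - M \<le> ev" using Npos by simp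
  show ?thesis using lb ub by simp
qed


end
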